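(* Let $n\ge2$, $A\in\mathbb{R}^{n\times n}$, $C\in\mathbb{R}^{1\times n}$, and suppose $(C,A)$ is observable, i.e. $\operatorname{rank}[C^T\ A^TC^T\ \cdots\ (A^{n-1})^TC^T]=n$. Let $S_0:=\mathcal{N}(C)$ and $S_k:=AS_{k-1}\cap S_0$ for $k\ge1$. Then the system $$\hat x^+ = A\big((\hat x+AS_{n-2})\cap(x+S_0)\big),$$ i.e. $\hat x^+\in g(\hat x,y):=A\big((\hat x+AS_{n-2})\cap\{\eta\in\mathbb{R}^n: C\eta=y\}\big)$ with $y=Cx$, is a deadbeat observer for $x^+=Ax$, $y=Cx$.
   Context: $AS:=\{As:s\in S\}$ and $\hat x+S:=\{\hat x+s:s\in S\}$. Solutions: $\phi(0,x)=x$, $\phi(k+1,x)=A\phi(k,x)$. Given $g:\mathbb{R}^n\times\mathbb{R}\rightrightarrows\mathbb{R}^n$, a solution of $\hat x^+\in g(\hat x,Cx)$ driven by $x^+=Ax$ is any sequence $\psi(k,\hat x,x)$ with $\psi(0,\hat x,x)=\hat x$, $\psi(k+1,\hat x,x)\in g(\psi(k,\hat x,x),C\phi(k,x))$. The system $\hat x^+\in g(\hat x,y)$ is a deadbeat observer if there is $p\ge1$ such that all such solutions satisfy $\psi(k,\hat x,x)=\phi(k,x)$ for all $x,\hat x\in\mathbb{R}^n$ and all $k\ge p$. *)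

theory Defs
  imports "HOL-Analysis.Analysis"
begin

text \<open>Matrix power (note: the ring power on vec types is componentwise, so we define it explicitly).\<close>
definition mpow :: "real^'n^'n \<Rightarrow> nat \<Rightarrow> real^'n^'n" where
  "mpow A k = (((**) A) ^^ k) (mat 1)"

text \<open>Output matrix C in R^{1 x n} is represented by the vector c, with C x = c \<bullet> x.
  Observability: rank [C^T, A^T C^T, ..., (A^{n-1})^T C^T] = n; the rank of a matrix is the
  dimension of the span of its columns, so this is the dimension of the set of these columns.\<close>
definition observable :: "real^'n^'n \<Rightarrow> real^'n \<Rightarrow> bool" where
  "observable A c \<longleftrightarrow> dim {transpose (mpow A k) *v c | k. k < CARD('n)} = CARD('n)"

fun Sseq :: "real^'n^'n \<Rightarrow> real^'n \<Rightarrow> nat \<Rightarrow> (real^'n) set" where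
  "Sseq A c 0 = {v. c \<bullet> v = 0}"
| "Sseq A c (Suc k) = ((\<lambda>v. A *v v) ` Sseq A c k) \<inter> Sseq A c 0"

definition phi :: "real^'n^'n \<Rightarrow> nat \<Rightarrow> real^'n \<Rightarrow> real^'n" where
  "phi A k x = mpow A k *v x"

definition observer_solution ::
  "real^'n^'n \<Rightarrow> real^'n \<Rightarrow> (real^'n \<Rightarrow> real \<Rightarrow> (real^'n) set)
     \<Rightarrow> real^'n \<Rightarrow> real^'n \<Rightarrow> (nat \<Rightarrow> real^'n) \<Rightarrow> bool" where
  "observer_solution A c g xh x psi \<longleftrightarrow>
     psi 0 = xh \<and> (\<forall>k. psi (Suc k) \<in> g (psi k) (c \<bullet> phi A k x))"

definition deadbeat_observer ::
  "real^'n^'n \<Rightarrow> real^'n \<Rightarrow> (real^'n \<Rightarrow> real \<Rightarrow> (real^'n) set) \<Rightarrow> bool" where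
  "deadbeat_observer A c g \<longleftrightarrow>
     (\<exists>p\<ge>1. \<forall>x xh psi. observer_solution A c g xh x psi \<longrightarrow>
        (\<forall>k\<ge>p. psi k = phi A k x))"

definition g_obs :: "real^'n^'n \<Rightarrow> real^'n \<Rightarrow> real^'n \<Rightarrow> real \<Rightarrow> (real^'n) set" where
  "g_obs A c xh y = (\<lambda>v. A *v v) `
     (((\<lambda>s. xh + s) ` ((\<lambda>v. A *v v) ` Sseq A c (CARD('n) - 2))) \<inter> {\<eta>. c \<bullet> \<eta> = y})"

end

theory Submission
  imports Defs
begin

lemma mpow_Suc: "mpow A (Suc k) = A ** mpow A k"
  by (simp add: mpow_def)

lemma phi_Suc: "phi A (Suc k) x = A *v phi A k x"
  by (simp add: phi_def mpow_Suc matrix_vector_mul_assoc)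

lemma S_subspace: "subspace (Sseq A c k)"
proof (induction k)
  case 0
  show ?case by (simp add: subspace_def inner_add_right)
next
  case (Suc k)
  have "subspace ((\<lambda>v. A *v v) ` Sseq A c k)"
    using Suc linear_subspace_image matrix_vector_mul_linear by blast
  moreover have "subspace (Sseq A c 0)" by (simp add: subspace_def inner_add_right)
  ultimately show ?case by (simp add: subspace_inter)
qed

lemma S_dec: "Sseq A c (Suc k) \<subseteq> Sseq A c k"
proof (induction k)
  case 0 then show ?case by auto
next
  case (Suc k)
  then show ?case by (auto simp del: Sseq.simps(1) simp: Sseq.simps(2)[of A c "Suc k"] Sseq.simps(2)[of A c k])
qed

lemma S_anti: "i \<le> j \<Longrightarrow> Sseq A c j \<subseteq> Sseq A c i"
  by (induction j rule: dec_induct) (use S_dec in blast)+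

lemma S_char: "v \<in> Sseq A c k \<Longrightarrow> \<exists>w. v = mpow A k *v w \<and> (\<forall>j\<le>k. c \<bullet> (mpow A j *v w) = 0)"
proof (induction k arbitrary: v)
  case 0
  then show ?case by (rule_tac x=v in exI) (simp add: mpow_def)
next
  case (Suc k)
  then obtain v' where v': "v = A *v v'" "v' \<in> Sseq A c k" "c \<bullet> v = 0" by auto
  then obtain w where w: "v' = mpow A k *v w" "\<forall>j\<le>k. c \<bullet> (mpow A j *v w) = 0"
    using Suc.IH by blast
  have e: "v = mpow A (Suc k) *v w" using v' w by (simp add: mpow_Suc matrix_vector_mul_assoc)
  show ?case
  proof (rule exI[of _ w], intro conjI allI impI)
    fix j assume "j \<le> Suc k"
    then show "c \<bullet> (mpow A j *v w) = 0"
      using w v' e by (cases "j = Suc k") auto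
  qed (rule e)
qed

lemma S_last:
  assumes obs: "observable A c" and v: "v \<in> Sseq A c (CARD('n) - 1)"
  shows "v = (0::real^'n)"
proof -
  obtain w where w: "v = mpow A (CARD('n) - 1) *v w"
    "\<forall>j\<le>CARD('n) - 1. c \<bullet> (mpow A j *v w) = 0"
    using S_char[OF v] by blast
  let ?B = "{transpose (mpow A k) *v c | k. k < CARD('n)}"
  have "DIM(real^'n) = CARD('n)" by simp
  then have "span ?B = UNIV" using obs unfolding observable_def
    by (metis (no_types, lifting) dim_eq_full)
  have orth: "orthogonal w y" if yB: "y \<in> ?B" for y
  proof -
    obtain k where k: "y = transpose (mpow A k) *v c" "k < CARD('n)" using yB by blast
    have "c \<bullet> (mpow A k *v w) = 0" using w(2) k(2) by simp
    then show ?thesis using k(1) dot_lmul_matrix[of c "mpow A k" w]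
      by (simp add: orthogonal_def inner_commute[of w])
  qed
  have "orthogonal w w"
    using orthogonal_to_span[of w ?B w] orth \<open>span ?B = UNIV\<close> by blast
  then have "w = 0" by (simp add: orthogonal_def)
  then show ?thesis using w(1) by simp
qed

theorem corollary1:
  fixes A :: "real^'n^'n" and c :: "real^'n"
  assumes "CARD('n) \<ge> 2"
    and "observable A c"
  shows "deadbeat_observer A c (g_obs A c)"
  unfolding deadbeat_observer_def
proof (rule exI[of _ "CARD('n)"], intro conjI allI impI)
  show "1 \<le> CARD('n)" using assms(1) by simp
  fix x xh psi k
  assume sol: "observer_solution A c (g_obs A c) xh x psi" and kN: "CARD('n) \<le> k"
  define N where "N = CARD('n)"
  have "\<forall>k. \<exists>w. w \<in> Sseq A c (N-2) \<and> psi (Suc k) = A *v (psi k + A *v w)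
          \<and> c \<bullet> (psi k + A *v w) = c \<bullet> phi A k x"
  proof
    fix k
    have "psi (Suc k) \<in> g_obs A c (psi k) (c \<bullet> phi A k x)" using sol
      by (simp add: observer_solution_def)
    then show "\<exists>w. w \<in> Sseq A c (N-2) \<and> psi (Suc k) = A *v (psi k + A *v w)
          \<and> c \<bullet> (psi k + A *v w) = c \<bullet> phi A k x"
      unfolding g_obs_def N_def by auto
  qed
  then obtain W where W: "\<And>k. W k \<in> Sseq A c (N-2)" "\<And>k. psi (Suc k) = A *v (psi k + A *v W k)"
    "\<And>k. c \<bullet> (psi k + A *v W k) = c \<bullet> phi A k x"
    by metis
  define e where "e k = psi k - phi A k x" for k
  define u where "u k = e k + A *v W k" for k
  have eS: "e (Suc k) = A *v u k" for k
    by (simp add: e_def u_def W(2) phi_Suc algebra_simps)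
  have cu: "c \<bullet> u k = 0" for k
    using W(3)[of k] by (simp add: u_def e_def inner_diff_right inner_add_right)
  have AW: "A *v W k \<in> (\<lambda>v. A *v v) ` Sseq A c i" if "i \<le> N - 2" for k i
    using W(1)[of k] S_anti[OF that, of A c] by blast
  have Q: "u k \<in> Sseq A c (min k (N-1))" for k
  proof (induction k)
    case 0
    have "e 0 = xh - x" using sol by (simp add: e_def observer_solution_def phi_def mpow_def)
    then show ?case using cu[of 0] by simp
  next
    case (Suc k)
    define i where "i = min k (N-2)"
    have i1: "min (Suc k) (N-1) = Suc i" using assms(1) unfolding i_def N_def by auto
    have "i \<le> min k (N-1)" unfolding i_def by simp
    then have "u k \<in> Sseq A c i" using Suc S_anti[of i "min k (N-1)" A c] by blast
    then have "e (Suc k) \<in> (\<lambda>v. A *v v) ` Sseq A c i" using eS by auto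
    moreover have "A *v W (Suc k) \<in> (\<lambda>v. A *v v) ` Sseq A c i" using AW[of i] i_def by simp
    moreover have "subspace ((\<lambda>v. A *v v) ` Sseq A c i)"
      using S_subspace linear_subspace_image matrix_vector_mul_linear by blast
    ultimately have "u (Suc k) \<in> (\<lambda>v. A *v v) ` Sseq A c i"
      unfolding u_def by (simp add: subspace_add)
    then show ?case using i1 cu[of "Suc k"] by simp
  qed
  obtain k' where k': "k = Suc k'" using kN assms(1) by (cases k) auto
  have "min k' (N-1) = N - 1" using k' kN unfolding N_def by simp
  then have "u k' \<in> Sseq A c (N - 1)" using Q[of k'] by simp
  then have "u k' = 0" using S_last[OF assms(2)] unfolding N_def by blast
  then have "e k = 0" using eS k' by simp
  then show "psi k = phi A k x" by (simp add: e_def)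
qed

end
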